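(* Let $\mu>0$ and let $\Omega$ be an optimal domain, with $\lambda_1,\lambda_2$ as in the optimality condition above, and set $Q=(\lambda_2/\mu,\,-\lambda_1/\mu)$ and $\lambda=\dfrac{2\mu A(\Omega)-E(\Omega)}{2\pi}$. Then on every open arc of $\partial\Omega$ where $k>0$ (strictly convex part), $k$ is smooth and $$k''(s)=-\tfrac12 k(s)^3-\lambda k(s)+\mu ,$$ and at every point $M(s)=(x(s),y(s))$ of $\partial\Omega$, $$\langle \overrightarrow{QM(s)},\mathsf{n}(s)\rangle=\frac{\lambda}{\mu}+\frac{1}{2\mu}k(s)^2,$$ where $\mathsf{n}(s)=(\sin\theta(s),-\cos\theta(s))$ is the exterior unit normal.
   Context: Let $\mathcal{C}$ be the class of bounded open convex sets $\Omega\subset\mathbb{R}^2$ whose boundary, of length $P$, is parametrized by arc length $s\mapsto(x(s),y(s))$ with $x'=\cos\theta$, $y'=\sin\theta$, $\theta\in W^{1,2}(0,P)$, $\theta'\ge0$ a.e., $\theta(P)=\theta(0)+2\pi$, $\int_0^P\cos\theta=\int_0^P\sin\theta=0$. Curvature $k=\theta'$, $E(\Omega)=\frac12\int_0^Pk^2ds$, $A$ area, $P$ perimeter, $J_\mu=E+\mu A$. An optimal domain is $\Omega\in\mathcal{C}$ with $P(\Omega)=2\pi$ minimizing $J_\mu$ among sets of $\mathcal{C}$ of perimeter $2\pi$. Optimality condition: with $x(0)=y(0)=0$ there exist reals $\lambda_1,\lambda_2,c$ with $\theta'(s)=\frac{\mu}{2}\big(\frac{\lambda_1^2+\lambda_2^2}{\mu^2}+\frac{2c}{\mu}-[x(s)-\frac{\lambda_2}{\mu}]^2-[y(s)+\frac{\lambda_1}{\mu}]^2\big)^-$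 for all $s$. *)

theory Defs
  imports "HOL-Analysis.Analysis"
begin

definition negpart :: "real \<Rightarrow> real" where
  "negpart t = max 0 (- t)"

definition xc :: "(real \<Rightarrow> real) \<Rightarrow> real \<Rightarrow> real" where
  "xc \<theta> s = integral {0..s} (\<lambda>t. cos (\<theta> t))"

definition yc :: "(real \<Rightarrow> real) \<Rightarrow> real \<Rightarrow> real" where
  "yc \<theta> s = integral {0..s} (\<lambda>t. sin (\<theta> t))"

text \<open>Class C with perimeter P: theta in W^{1,2}(0,P) written as
  theta(s) = theta(0) + int_0^s k with k in L^2 (k = theta'), k >= 0 a.e.,
  total turning 2 pi, closed curve.\<close>
definition admissible :: "real \<Rightarrow> (real \<Rightarrow> real) \<Rightarrow> (real \<Rightarrow> real) \<Rightarrow> bool" where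
  "admissible P \<theta> k \<longleftrightarrow>
     0 < P \<and>
     k absolutely_integrable_on {0..P} \<and>
     (\<lambda>s. (k s)\<^sup>2) integrable_on {0..P} \<and>
     negligible {s \<in> {0..P}. k s < 0} \<and>
     (\<forall>s\<in>{0..P}. \<theta> s = \<theta> 0 + integral {0..s} k) \<and>
     \<theta> P = \<theta> 0 + 2 * pi \<and>
     integral {0..P} (\<lambda>s. cos (\<theta> s)) = 0 \<and>
     integral {0..P} (\<lambda>s. sin (\<theta> s)) = 0"

definition energy :: "real \<Rightarrow> (real \<Rightarrow> real) \<Rightarrow> real" where
  "energy P k = integral {0..P} (\<lambda>s. (k s)\<^sup>2) / 2"

text \<open>Enclosed area via Green's formula A = 1/2 int (x y' - y x').\<close>
definition area :: "real \<Rightarrow> (real \<Rightarrow> real) \<Rightarrow> real" where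
  "area P \<theta> = integral {0..P} (\<lambda>s. xc \<theta> s * sin (\<theta> s) - yc \<theta> s * cos (\<theta> s)) / 2"

definition Jmu :: "real \<Rightarrow> real \<Rightarrow> (real \<Rightarrow> real) \<Rightarrow> (real \<Rightarrow> real) \<Rightarrow> real" where
  "Jmu \<mu> P \<theta> k = energy P k + \<mu> * area P \<theta>"

definition optimal :: "real \<Rightarrow> (real \<Rightarrow> real) \<Rightarrow> (real \<Rightarrow> real) \<Rightarrow> bool" where
  "optimal \<mu> \<theta> k \<longleftrightarrow> admissible (2 * pi) \<theta> k \<and>
     (\<forall>\<theta>' k'. admissible (2 * pi) \<theta>' k' \<longrightarrow> Jmu \<mu> (2 * pi) \<theta> k \<le> Jmu \<mu> (2 * pi) \<theta>' k')"

definition perext :: "(real \<Rightarrow> real) \<Rightarrow> real \<Rightarrow> real" where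
  "perext f s = f (s - 2 * pi * of_int \<lfloor>s / (2 * pi)\<rfloor>)"

definition smooth_on :: "real set \<Rightarrow> (real \<Rightarrow> real) \<Rightarrow> bool" where
  "smooth_on S f \<longleftrightarrow> (\<exists>D. (\<forall>s\<in>S. D 0 s = f s) \<and>
     (\<forall>n. \<forall>s\<in>S. (D n has_real_derivative D (Suc n) s) (at s)))"

end

theory Submission
  imports Defs
begin

lemma deriv_glue:
  fixes f :: "real \<Rightarrow> real"
  assumes "(f has_real_derivative D) (at x within {..x})"
    and "(f has_real_derivative D) (at x within {x..})"
  shows "(f has_real_derivative D) (at x)"
proof -
  have "{..x} \<union> {x..} = (UNIV::real set)" by auto
  moreover have "(f has_real_derivative D) (at x within ({..x} \<union> {x..}))"
    using assms unfolding has_field_derivative_iff by (subst at_within_union) (rule filterlim_sup)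
  ultimately show ?thesis by simp
qed

definition pext :: "real \<Rightarrow> real \<Rightarrow> (real \<Rightarrow> real) \<Rightarrow> real \<Rightarrow> real" where
  "pext T c f s = f (s - T * of_int \<lfloor>s / T\<rfloor>) + c * of_int \<lfloor>s / T\<rfloor>"

lemma red_range:
  fixes T s :: real assumes "T > 0"
  shows "s - T * of_int \<lfloor>s / T\<rfloor> \<in> {0..<T}"
proof -
  have a: "of_int \<lfloor>s / T\<rfloor> \<le> s / T" "s / T < of_int \<lfloor>s / T\<rfloor> + 1" by linarith+
  have "T * of_int \<lfloor>s / T\<rfloor> \<le> s" using a(1) assms by (simp add: le_divide_eq mult.commute)
  moreover have "s < T * of_int \<lfloor>s / T\<rfloor> + T" using a(2) assms by (simp add: divide_less_eq algebra_simps)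
  ultimately show ?thesis by auto
qed

lemma pext_shift:
  fixes T :: real assumes "T > 0"
  shows "pext T c f (s + T * of_int n) = pext T c f s + c * of_int n"
proof -
  have "(s + T * of_int n) / T = s / T + of_int n" using assms by (simp add: field_simps)
  then have "\<lfloor>(s + T * of_int n) / T\<rfloor> = \<lfloor>s / T\<rfloor> + n" by simp
  then show ?thesis unfolding pext_def by (simp add: algebra_simps)
qed

lemma pext_base: fixes T :: real assumes "T > 0" "u \<in> {0..<T}" shows "pext T c f u = f u"
proof -
  have "\<lfloor>u / T\<rfloor> = 0" using assms by (simp add: floor_eq_iff field_simps)
  then show ?thesis by (simp add: pext_def)
qed

lemma pext_left: fixes T :: real assumes "T > 0" "u \<in> {-T..0}" "f T = f 0 + c"
  shows "pext T c f u = f (u + T) - c"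
proof (cases "u = 0")
  case True then show ?thesis using pext_base[of T 0 c f] assms by simp
next
  case False
  then have "\<lfloor>u / T\<rfloor> = -1" using assms by (simp add: floor_eq_iff field_simps)
  then show ?thesis by (simp add: pext_def)
qed

lemma pext_deriv0:
  fixes T c :: real and f f' :: "real \<Rightarrow> real"
  assumes T: "T > 0"
    and d: "\<And>t. t \<in> {0..T} \<Longrightarrow> (f has_real_derivative f' t) (at t within {0..T})"
    and e: "f T = f 0 + c" "f' T = f' 0"
    and t: "t \<in> {0..<T}"
  shows "(pext T c f has_real_derivative f' t) (at t)"
proof (cases "t = 0")
  case False
  then have "0 < t" "t < T" using t by auto
  then have "(f has_real_derivative f' t) (at t)" using d[of t] by (simp add: at_within_Icc_at)
  then show ?thesis
    by (rule has_field_derivative_transform_within_open[where S="{0<..<T}"])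
       (use \<open>0 < t\<close> \<open>t < T\<close> pext_base[OF T] in auto)
next
  case True
  have r1: "(pext T c f has_real_derivative f' 0) (at 0 within {0..T})"
    by (rule has_field_derivative_transform_within[OF d[of 0] T]) (use T pext_base[OF T] in auto)
  have "at (0::real) within {0..T} = at 0 within {0..}"
    by (rule at_within_nhd[where S="{-1<..<T}"]) (use T in auto)
  with r1 have R: "(pext T c f has_real_derivative f' 0) (at 0 within {0..})" by simp
  have im: "(\<lambda>u. u + T) ` {-T..0} = {0..T}"
  proof -
    have "\<And>v. v \<in> {0..T} \<Longrightarrow> v \<in> (\<lambda>u. u + T) ` {-T..0}"
      by (rule_tac x="v - T" in image_eqI) auto
    then show ?thesis by auto
  qed
  have "(f \<circ> (\<lambda>u. u + T) has_real_derivative f' T * 1) (at 0 within {-T..0})"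
    by (rule DERIV_image_chain) (use d[of T] T im in \<open>auto intro!: derivative_eq_intros\<close>)
  then have "((\<lambda>u. f (u + T) - c) has_real_derivative f' T) (at 0 within {-T..0})"
    by (auto intro!: derivative_eq_intros simp: o_def)
  then have "((\<lambda>u. f (u + T) - c) has_real_derivative f' 0) (at 0 within {-T..0})" using e(2) by simp
  then have l1: "(pext T c f has_real_derivative f' 0) (at 0 within {-T..0})"
    by (rule has_field_derivative_transform_within[where d=T]) (use T pext_left[OF T _ e(1)] in auto)
  have "at (0::real) within {-T..0} = at 0 within {..0}"
    by (rule at_within_nhd[where S="{-T<..<1}"]) (use T in auto)
  with l1 have L: "(pext T c f has_real_derivative f' 0) (at 0 within {..0})" by simp
  show ?thesis using deriv_glue[OF L R] True by simp
qed

lemma pext_deriv: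
  fixes T c :: real and f f' :: "real \<Rightarrow> real"
  assumes T: "T > 0"
    and d: "\<And>t. t \<in> {0..T} \<Longrightarrow> (f has_real_derivative f' t) (at t within {0..T})"
    and e: "f T = f 0 + c" "f' T = f' 0"
  shows "(pext T c f has_real_derivative f' (s - T * of_int \<lfloor>s / T\<rfloor>)) (at s)"
proof -
  define m where "m = \<lfloor>s / T\<rfloor>"
  define t where "t = s - T * of_int m"
  have t: "t \<in> {0..<T}" using red_range[OF T, of s] by (simp add: t_def m_def)
  have D: "(pext T c f has_real_derivative f' t) (at (s + (- T * of_int m)))"
    using pext_deriv0[OF T d e t] by (simp add: t_def)
  have "((\<lambda>u. pext T c f (u + (- T * of_int m))) has_real_derivative f' t) (at s)"
    using D by (subst (asm) DERIV_shift)
  then have "((\<lambda>u. pext T c f (u + (- T * of_int m)) + c * of_int m) has_real_derivative f' t) (at s)"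
    by (auto intro!: derivative_eq_intros)
  moreover have "(\<lambda>u. pext T c f (u + (- T * of_int m)) + c * of_int m) = pext T c f"
  proof
    fix u
    have "pext T c f (u + (- T * of_int m) + T * of_int m) = pext T c f (u + (- T * of_int m)) + c * of_int m"
      by (rule pext_shift[OF T])
    then show "pext T c f (u + (- T * of_int m)) + c * of_int m = pext T c f u" by simp
  qed
  ultimately show ?thesis by (simp add: t_def m_def)
qed

fun Cn :: "nat \<Rightarrow> real set \<Rightarrow> (real \<Rightarrow> real) \<Rightarrow> bool" where
  "Cn 0 S f = True"
| "Cn (Suc n) S f = ((\<forall>s\<in>S. f differentiable at s) \<and> Cn n S (deriv f))"

lemma Cn_mono: "Cn (Suc n) S f \<Longrightarrow> Cn n S f"
proof (induction n arbitrary: f)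
  case 0 then show ?case by simp
next
  case (Suc n) then show ?case by auto
qed

lemma diff_cong_open:
  fixes f g :: "real \<Rightarrow> real"
  assumes "open S" "x \<in> S" "\<forall>y\<in>S. f y = g y" "f differentiable at x"
  shows "g differentiable at x" "deriv f x = deriv g x"
proof -
  have "(f has_real_derivative deriv f x) (at x)"
    using assms(4) DERIV_deriv_iff_real_differentiable by blast
  then have "(g has_real_derivative deriv f x) (at x)"
    by (rule has_field_derivative_transform_within_open[OF _ assms(1,2)]) (use assms(3) in auto)
  then show "g differentiable at x" using DERIV_deriv_iff_real_differentiable DERIV_imp_deriv by metis
  show "deriv f x = deriv g x"
    by (rule deriv_cong_ev) (use assms(1-3) in \<open>auto simp: eventually_nhds\<close>)
qed

lemma deriv_cong_open:
  fixes f g :: "real \<Rightarrow> real"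
  assumes "open S" "x \<in> S" "\<forall>y\<in>S. f y = g y"
  shows "deriv f x = deriv g x"
  by (rule deriv_cong_ev) (use assms(1-3) in \<open>auto simp: eventually_nhds\<close>)

lemma Cn_cong: "open S \<Longrightarrow> \<forall>x\<in>S. f x = g x \<Longrightarrow> Cn n S f \<Longrightarrow> Cn n S g"
proof (induction n arbitrary: f g)
  case 0 then show ?case by simp
next
  case (Suc n)
  have "\<forall>s\<in>S. g differentiable at s" using Suc.prems diff_cong_open(1) by auto
  moreover have "\<forall>x\<in>S. deriv f x = deriv g x" using Suc.prems deriv_cong_open by blast
  then have "Cn n S (deriv g)" using Suc by auto
  ultimately show ?case by simp
qed

lemma Cn_const: "Cn n S (\<lambda>_. c)"
proof (induction n arbitrary: c)
  case 0 then show ?case by simp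
next
  case (Suc n)
  have "deriv (\<lambda>_. c) = (\<lambda>_. 0::real)" by (intro ext DERIV_imp_deriv) (auto intro!: derivative_eq_intros)
  then show ?case using Suc by simp
qed

lemma Cn_add: "open S \<Longrightarrow> Cn n S f \<Longrightarrow> Cn n S g \<Longrightarrow> Cn n S (\<lambda>x. f x + g x)"
proof (induction n arbitrary: f g)
  case 0 then show ?case by simp
next
  case (Suc n)
  have d: "\<forall>s\<in>S. f differentiable at s" "\<forall>s\<in>S. g differentiable at s" using Suc.prems by auto
  have "\<forall>x\<in>S. deriv f x + deriv g x = deriv (\<lambda>x. f x + g x) x"
    using d by (auto intro!: DERIV_imp_deriv[symmetric] derivative_eq_intros simp: DERIV_deriv_iff_real_differentiable)
  moreover have "Cn n S (\<lambda>x. deriv f x + deriv g x)"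
    using Suc.IH[OF Suc.prems(1)] Suc.prems(2,3) by simp
  ultimately have "Cn n S (deriv (\<lambda>x. f x + g x))" by (rule Cn_cong[OF Suc.prems(1)])
  moreover have "\<forall>s\<in>S. (\<lambda>x. f x + g x) differentiable at s" using d by auto
  ultimately show ?case by simp
qed

lemma Cn_mult: "open S \<Longrightarrow> Cn n S f \<Longrightarrow> Cn n S g \<Longrightarrow> Cn n S (\<lambda>x. f x * g x)"
proof (induction n arbitrary: f g)
  case 0 then show ?case by simp
next
  case (Suc n)
  have d: "\<forall>s\<in>S. f differentiable at s" "\<forall>s\<in>S. g differentiable at s" using Suc.prems by auto
  have "\<forall>x\<in>S. deriv f x * g x + f x * deriv g x = deriv (\<lambda>x. f x * g x) x"
  proof
    fix x assume "x \<in> S"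
    then have "(f has_real_derivative deriv f x) (at x)" "(g has_real_derivative deriv g x) (at x)"
      using d DERIV_deriv_iff_real_differentiable by blast+
    from DERIV_mult'[OF this] have "f x * deriv g x + deriv f x * g x = deriv (\<lambda>x. f x * g x) x"
      by (rule DERIV_imp_deriv[symmetric])
    then show "deriv f x * g x + f x * deriv g x = deriv (\<lambda>x. f x * g x) x" by simp
  qed
  moreover have "Cn n S (\<lambda>x. deriv f x * g x + f x * deriv g x)"
  proof (rule Cn_add[OF Suc.prems(1)])
    have c: "Cn n S (deriv f)" "Cn n S (deriv g)" using Suc.prems(2,3) by simp_all
    have m: "Cn n S f" "Cn n S g" by (rule Cn_mono, rule Suc.prems(2)) (rule Cn_mono, rule Suc.prems(3))
    show "Cn n S (\<lambda>x. deriv f x * g x)" by (rule Suc.IH[OF Suc.prems(1) c(1) m(2)])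
    show "Cn n S (\<lambda>x. f x * deriv g x)" by (rule Suc.IH[OF Suc.prems(1) m(1) c(2)])
  qed
  ultimately have "Cn n S (deriv (\<lambda>x. f x * g x))" by (rule Cn_cong[OF Suc.prems(1)])
  moreover have "\<forall>s\<in>S. (\<lambda>x. f x * g x) differentiable at s" using d by auto
  ultimately show ?case by simp
qed

lemma Cn_higher: "Cn (Suc n) S f \<Longrightarrow> s \<in> S \<Longrightarrow> (deriv ^^ n) f differentiable at s"
proof (induction n arbitrary: f)
  case 0 then show ?case by simp
next
  case (Suc n)
  then have "(deriv ^^ n) (deriv f) differentiable at s" by simp
  then show ?case by (simp add: funpow_Suc_right del: funpow.simps)
qed

lemma Cn_smooth: "(\<And>n. Cn n S f) \<Longrightarrow> smooth_on S f"
  unfolding smooth_on_def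
proof (intro exI[of _ "\<lambda>n. (deriv ^^ n) f"] conjI ballI allI)
  fix n s assume "\<And>n. Cn n S f" "s \<in> S"
  then have "(deriv ^^ n) f differentiable at s" using Cn_higher by blast
  then show "((deriv ^^ n) f has_real_derivative (deriv ^^ Suc n) f s) (at s)"
    using DERIV_deriv_iff_real_differentiable by simp
qed simp

lemma maxsq_deriv:
  "((\<lambda>t::real. (max 0 t)\<^sup>2) has_real_derivative 2 * max 0 t) (at t)"
proof -
  consider "t > 0" | "t < 0" | "t = 0" by linarith
  then show ?thesis
  proof cases
    case 1
    have "((\<lambda>t::real. t\<^sup>2) has_real_derivative 2 * max 0 t) (at t)" using 1 by (auto intro!: derivative_eq_intros)
    then show ?thesis
      by (rule has_field_derivative_transform_within_open[where S="{0<..}"]) (use 1 in auto)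
  next
    case 2
    have "((\<lambda>t::real. 0) has_real_derivative 2 * max 0 t) (at t)" using 2 by (auto intro!: derivative_eq_intros)
    then show ?thesis
      by (rule has_field_derivative_transform_within_open[where S="{..<0}"]) (use 2 in auto)
  next
    case 3
    have "((\<lambda>t::real. t\<^sup>2) has_real_derivative 0) (at 0 within {0..})"
      by (auto intro!: derivative_eq_intros)
    then have R: "((\<lambda>t::real. (max 0 t)\<^sup>2) has_real_derivative 0) (at 0 within {0..})"
      by (rule has_field_derivative_transform_within[where d=1]) auto
    have "((\<lambda>t::real. 0) has_real_derivative 0) (at 0 within {..0})"
      by (auto intro!: derivative_eq_intros)
    then have L: "((\<lambda>t::real. (max 0 t)\<^sup>2) has_real_derivative 0) (at 0 within {..0})"
      by (rule has_field_derivative_transform_within[where d=1]) auto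
    show ?thesis using deriv_glue[OF L R] 3 by simp
  qed
qed

lemma maxsq_deriv_chain[derivative_intros]:
  "(g has_real_derivative g') (at x within S) \<Longrightarrow>
   ((\<lambda>x. (max 0 (g x))\<^sup>2) has_real_derivative 2 * max 0 (g x) * g') (at x within S)"
  using DERIV_chain2[OF maxsq_deriv] by blast

lemma cos_shift_int: "cos (x + 2 * pi * of_int m) = cos x"
  by (simp add: cos_add mult.commute[of 2] mult.assoc)
    (metis cos_int_2pin sin_int_2pin mult.commute mult.assoc mult_1_right mult_zero_right diff_zero)

lemma sin_shift_int: "sin (x + 2 * pi * of_int m) = sin x"
  by (simp add: sin_add)

definition hsq :: "real \<Rightarrow> real" where "hsq t = (max 0 t)\<^sup>2"

lemma hsq_chain:
  "(g has_real_derivative g') (at x within S) \<Longrightarrow> D = 2 * max 0 (g x) * g' \<Longrightarrow>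
   ((\<lambda>x. hsq (g x)) has_real_derivative D) (at x within S)"
  unfolding hsq_def using DERIV_chain2[OF maxsq_deriv] by blast

theorem proposition2p4:
  fixes \<mu> lam1 lam2 c :: real and \<theta> k :: "real \<Rightarrow> real"
  assumes "\<mu> > 0"
    and "optimal \<mu> \<theta> k"
    and "\<forall>s\<in>{0..2*pi}. k s = \<mu> / 2 * negpart
           ((lam1\<^sup>2 + lam2\<^sup>2) / \<mu>\<^sup>2 + 2 * c / \<mu>
            - (xc \<theta> s - lam2 / \<mu>)\<^sup>2 - (yc \<theta> s + lam1 / \<mu>)\<^sup>2)"
  shows "(let lam = (2 * \<mu> * area (2*pi) \<theta> - energy (2*pi) k) / (2 * pi) in
           (\<forall>a b. (\<forall>s\<in>{a<..<b}. perext k s > 0) \<longrightarrow>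
              smooth_on {a<..<b} (perext k) \<and>
              (\<forall>s\<in>{a<..<b}. deriv (deriv (perext k)) s
                   = - ((perext k s) ^ 3) / 2 - lam * perext k s + \<mu>)) \<and>
           (\<forall>s\<in>{0..2*pi}.
              (xc \<theta> s - lam2 / \<mu>) * sin (\<theta> s) + (yc \<theta> s - (- lam1 / \<mu>)) * (- cos (\<theta> s))
              = lam / \<mu> + (k s)\<^sup>2 / (2 * \<mu>)))"
proof -
  define T :: real where "T = 2 * pi"
  have T: "T > 0" by (simp add: T_def)
  define q1 where "q1 = lam2 / \<mu>"
  define q2 where "q2 = - lam1 / \<mu>"
  define R2 where "R2 = (lam1\<^sup>2 + lam2\<^sup>2) / \<mu>\<^sup>2 + 2 * c / \<mu>"
  define G where "G s = (xc \<theta> s - q1)\<^sup>2 + (yc \<theta> s - q2)\<^sup>2 - R2" for s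
  define kf where "kf s = \<mu> / 2 * max 0 (G s)" for s
  define lam where "lam = (2 * \<mu> * area (2*pi) \<theta> - energy (2*pi) k) / (2 * pi)"
  have kkf: "k s = kf s" if "s \<in> {0..T}" for s
  proof -
    have "k s = \<mu> / 2 * negpart (R2 - (xc \<theta> s - q1)\<^sup>2 - (yc \<theta> s - q2)\<^sup>2)"
      using assms(3) that by (simp add: T_def R2_def q1_def q2_def)
    moreover have "- (R2 - (xc \<theta> s - q1)\<^sup>2 - (yc \<theta> s - q2)\<^sup>2) = G s" by (simp add: G_def)
    ultimately show ?thesis by (simp add: kf_def negpart_def)
  qed
  have adm: "admissible (2*pi) \<theta> k" using assms(2) by (simp add: optimal_def)
  then have kint: "k integrable_on {0..T}"
    and k2int: "(\<lambda>s. (k s)\<^sup>2) integrable_on {0..T}"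
    and th: "\<And>s. s \<in> {0..T} \<Longrightarrow> \<theta> s = \<theta> 0 + integral {0..s} k"
    and thT: "\<theta> T = \<theta> 0 + T"
    and icos: "integral {0..T} (\<lambda>s. cos (\<theta> s)) = 0"
    and isin: "integral {0..T} (\<lambda>s. sin (\<theta> s)) = 0"
    unfolding admissible_def T_def absolutely_integrable_on_def by blast+
  have thc: "continuous_on {0..T} \<theta>"
  proof -
    have "continuous_on {0..T} (\<lambda>s. \<theta> 0 + integral {0..s} k)"
      by (rule continuous_on_add[OF continuous_on_const indefinite_integral_continuous_1[OF kint]])
    then show ?thesis by (rule continuous_on_eq) (rule th[symmetric])
  qed
  have ccos: "continuous_on {0..T} (\<lambda>s. cos (\<theta> s))" "continuous_on {0..T} (\<lambda>s. sin (\<theta> s))"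
    by (rule continuous_on_cos[OF thc], rule continuous_on_sin[OF thc])
  have dx: "(xc \<theta> has_real_derivative cos (\<theta> s)) (at s within {0..T})" if "s \<in> {0..T}" for s
    using integral_has_vector_derivative[OF ccos(1) that]
    by (simp add: xc_def[abs_def] has_real_derivative_iff_has_vector_derivative)
  have dy: "(yc \<theta> has_real_derivative sin (\<theta> s)) (at s within {0..T})" if "s \<in> {0..T}" for s
    using integral_has_vector_derivative[OF ccos(2) that]
    by (simp add: yc_def[abs_def] has_real_derivative_iff_has_vector_derivative)
  have xcc: "continuous_on {0..T} (xc \<theta>)" "continuous_on {0..T} (yc \<theta>)"
    unfolding xc_def[abs_def] yc_def[abs_def]
    by (intro indefinite_integral_continuous_1 integrable_continuous_interval ccos)+
  have kfc: "continuous_on {0..T} kf"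
    unfolding kf_def[abs_def] G_def by (intro continuous_intros xcc)
  have x0: "xc \<theta> 0 = 0" "yc \<theta> 0 = 0" by (simp_all add: xc_def yc_def)
  have xT: "xc \<theta> T = 0" "yc \<theta> T = 0" using icos isin by (simp_all add: xc_def yc_def)
  have kfT: "kf T = kf 0" unfolding kf_def G_def using x0 xT by simp
  have dth: "(\<theta> has_real_derivative kf s) (at s within {0..T})" if s: "s \<in> {0..T}" for s
  proof -
    have "((\<lambda>u. \<theta> 0 + integral {0..u} kf) has_real_derivative kf s) (at s within {0..T})"
      using integral_has_vector_derivative[OF kfc s]
      by (auto intro!: derivative_eq_intros simp: has_real_derivative_iff_has_vector_derivative)
    then show ?thesis
    proof (rule has_field_derivative_transform_within[where d=1])
      fix u assume u: "u \<in> {0..T}"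
      have "integral {0..u} kf = integral {0..u} k" by (rule integral_cong) (use u kkf in auto)
      then show "\<theta> 0 + integral {0..u} kf = \<theta> u" using th[OF u] by linarith
    qed (use s in auto)
  qed
  define F where "F s = (xc \<theta> s - q1) * sin (\<theta> s) + (yc \<theta> s - q2) * (- cos (\<theta> s)) - (kf s)\<^sup>2 / (2 * \<mu>)" for s
  have dG: "(G has_real_derivative 2 * (xc \<theta> s - q1) * cos (\<theta> s) + 2 * (yc \<theta> s - q2) * sin (\<theta> s)) (at s within {0..T})"
    if s: "s \<in> {0..T}" for s
    unfolding G_def[abs_def]
    apply (rule derivative_eq_intros dx[OF s] dy[OF s] refl)+
    apply (simp add: algebra_simps)
    done
  have Fe: "F = (\<lambda>s. (xc \<theta> s - q1) * sin (\<theta> s) + (yc \<theta> s - q2) * (- cos (\<theta> s)) - \<mu> / 8 * hsq (G s))"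
    using assms(1) by (intro ext) (simp add: F_def kf_def hsq_def power_mult_distrib power2_eq_square field_simps)
  have dF: "(F has_real_derivative 0) (at s within {0..T})" if s: "s \<in> {0..T}" for s
    unfolding Fe
    apply (rule derivative_eq_intros dx[OF s] dy[OF s] dth[OF s] dG[OF s] hsq_chain refl)+
    apply (simp add: kf_def field_simps)
    done
  obtain C where C: "\<And>s. s \<in> {0..T} \<Longrightarrow> F s = C"
    using has_field_derivative_zero_constant[of "{0..T}" F] dF by auto
  define A1 where "A1 s = xc \<theta> s * sin (\<theta> s) - yc \<theta> s * cos (\<theta> s)" for s
  have A1c: "continuous_on {0..T} A1"
    unfolding A1_def[abs_def]
    by (intro continuous_on_diff continuous_on_mult xcc ccos)
  have kf2c: "continuous_on {0..T} (\<lambda>s. (kf s)\<^sup>2)"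
    by (intro continuous_on_power kfc)
  have IA: "(A1 has_integral 2 * area (2*pi) \<theta>) {0..T}"
  proof -
    have "(A1 has_integral integral {0..T} A1) {0..T}"
      using integrable_continuous_interval[OF A1c] by (rule integrable_integral)
    moreover have "integral {0..T} A1 = 2 * area (2*pi) \<theta>"
      by (simp add: area_def A1_def[abs_def] T_def)
    ultimately show ?thesis by simp
  qed
  have IK: "((\<lambda>s. (kf s)\<^sup>2) has_integral 2 * energy (2*pi) k) {0..T}"
  proof -
    have "((\<lambda>s. (kf s)\<^sup>2) has_integral integral {0..T} (\<lambda>s. (kf s)\<^sup>2)) {0..T}"
      using integrable_continuous_interval[OF kf2c] by (rule integrable_integral)
    moreover have "integral {0..T} (\<lambda>s. (kf s)\<^sup>2) = integral {0..T} (\<lambda>s. (k s)\<^sup>2)"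
      by (rule integral_cong) (simp add: kkf)
    moreover have "integral {0..T} (\<lambda>s. (k s)\<^sup>2) = 2 * energy (2*pi) k"
      by (simp add: energy_def T_def)
    ultimately show ?thesis by simp
  qed
  have IS: "((\<lambda>s. sin (\<theta> s)) has_integral 0) {0..T}"
    using integrable_integral[OF integrable_continuous_interval[OF ccos(2)]] isin by simp
  have IC: "((\<lambda>s. cos (\<theta> s)) has_integral 0) {0..T}"
    using integrable_integral[OF integrable_continuous_interval[OF ccos(1)]] icos by simp
  have Iall: "((\<lambda>s. A1 s + (- q1) * sin (\<theta> s) + q2 * cos (\<theta> s) - (1 / (2 * \<mu>)) * (kf s)\<^sup>2) has_integral
      (2 * area (2*pi) \<theta> + (- q1) * 0 + q2 * 0 - (1 / (2 * \<mu>)) * (2 * energy (2*pi) k))) {0..T}"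
    by (intro has_integral_diff has_integral_add has_integral_mult_right IA IK IS IC)
  have I1: "((\<lambda>s. C) has_integral
      (2 * area (2*pi) \<theta> + (- q1) * 0 + q2 * 0 - (1 / (2 * \<mu>)) * (2 * energy (2*pi) k))) {0..T}"
  proof (rule has_integral_cong[THEN iffD1, OF _ Iall])
    fix s assume "s \<in> {0..T}"
    then show "A1 s + (- q1) * sin (\<theta> s) + q2 * cos (\<theta> s) - (1 / (2 * \<mu>)) * (kf s)\<^sup>2 = C"
    proof -
      have "F s = C" using C \<open>s \<in> {0..T}\<close> by blast
      then show ?thesis unfolding F_def A1_def by (simp add: algebra_simps)
    qed
  qed
  have I2: "((\<lambda>s. C) has_integral T * C) {0..T}"
    using has_integral_const_real[of C 0 T] T by simp
  have TC: "T * C = 2 * area (2*pi) \<theta> - (1 / (2 * \<mu>)) * (2 * energy (2*pi) k)"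
    using has_integral_unique[OF I2 I1] by simp
  have Clam: "C = lam / \<mu>"
    using TC assms(1) T unfolding lam_def T_def by (simp add: field_simps)
  have part2: "\<forall>s\<in>{0..2*pi}.
      (xc \<theta> s - lam2 / \<mu>) * sin (\<theta> s) + (yc \<theta> s - (- lam1 / \<mu>)) * (- cos (\<theta> s))
      = lam / \<mu> + (k s)\<^sup>2 / (2 * \<mu>)"
  proof
    fix s :: real assume s: "s \<in> {0..2*pi}"
    then have sT: "s \<in> {0..T}" by (simp add: T_def)
    have "F s = C" "k s = kf s" using C[OF sT] kkf[OF sT] by blast+
    then show "(xc \<theta> s - lam2 / \<mu>) * sin (\<theta> s) + (yc \<theta> s - (- lam1 / \<mu>)) * (- cos (\<theta> s))
      = lam / \<mu> + (k s)\<^sup>2 / (2 * \<mu>)"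
      by (simp add: F_def q1_def q2_def Clam)
  qed
  define Th where "Th = pext T T \<theta>"
  define X where "X = pext T 0 (xc \<theta>)"
  define Y where "Y = pext T 0 (yc \<theta>)"
  define K where "K = perext k"
  define r where "r s = s - T * of_int \<lfloor>s / T\<rfloor>" for s
  have rr: "r s \<in> {0..T}" for s using red_range[OF T, of s] by (auto simp: r_def)
  have Kr: "K s = kf (r s)" for s
    using kkf[OF rr[of s]] by (simp add: K_def perext_def r_def T_def)
  have Xr: "X s = xc \<theta> (r s)" "Y s = yc \<theta> (r s)" for s
    by (simp_all add: X_def Y_def pext_def r_def)
  have Thr: "cos (Th s) = cos (\<theta> (r s))" "sin (Th s) = sin (\<theta> (r s))" for s
    unfolding Th_def pext_def r_def T_def using cos_shift_int sin_shift_int by simp_all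
  have dTh: "(Th has_real_derivative K s) (at s)" for s
    using pext_deriv[OF T dth thT kfT, of s] by (simp add: Th_def Kr r_def)
  have cT: "cos (\<theta> T) = cos (\<theta> 0)" "sin (\<theta> T) = sin (\<theta> 0)" using thT by (simp_all add: T_def)
  have dX: "(X has_real_derivative cos (Th s)) (at s)" for s
    using pext_deriv[OF T dx, of 0 s] xT x0 cT by (simp add: X_def Thr r_def)
  have dY: "(Y has_real_derivative sin (Th s)) (at s)" for s
    using pext_deriv[OF T dy, of 0 s] xT x0 cT by (simp add: Y_def Thr r_def)
  have ident: "(X s - q1) * sin (Th s) + (Y s - q2) * (- cos (Th s)) = lam / \<mu> + (K s)\<^sup>2 / (2 * \<mu>)" for s
  proof -
    have "F (r s) = C" using C[OF rr[of s]] .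
    then show ?thesis unfolding F_def Clam by (simp add: Xr Thr Kr)
  qed
  define K1 where "K1 u = \<mu> * ((X u - q1) * cos (Th u) + (Y u - q2) * sin (Th u))" for u
  have dK1: "(K1 has_real_derivative \<mu> - lam * K u - (K u)^3 / 2) (at u)" for u
  proof -
    have "(K1 has_real_derivative \<mu> * ((cos (Th u) * cos (Th u) + sin (Th u) * sin (Th u))
          - K u * ((X u - q1) * sin (Th u) + (Y u - q2) * (- cos (Th u))))) (at u)"
      unfolding K1_def[abs_def]
      apply (rule derivative_eq_intros dX dY dTh refl)+
      apply (simp add: algebra_simps)
      apply (metis sin_cos_squared_add3 distrib_left mult.right_neutral)
      done
    moreover have "\<mu> * ((cos (Th u) * cos (Th u) + sin (Th u) * sin (Th u))
          - K u * ((X u - q1) * sin (Th u) + (Y u - q2) * (- cos (Th u)))) = \<mu> - lam * K u - (K u)^3 / 2"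
    proof -
      have "cos (Th u) * cos (Th u) + sin (Th u) * sin (Th u) = 1"
        using sin_cos_squared_add[of "Th u"] by (simp add: power2_eq_square)
      then show ?thesis using assms(1) unfolding ident by (simp add: field_simps power2_eq_square power3_eq_cube)
    qed
    ultimately show ?thesis by simp
  qed
  have part1: "(\<forall>s\<in>{a<..<b}. K s > 0) \<longrightarrow> smooth_on {a<..<b} K \<and>
      (\<forall>s\<in>{a<..<b}. deriv (deriv K) s = - ((K s) ^ 3) / 2 - lam * K s + \<mu>)" for a b
  proof
    assume pos: "\<forall>s\<in>{a<..<b}. K s > 0"
    define S where "S = {a<..<b}"
    have oS: "open S" by (simp add: S_def)
    define GG where "GG u = (X u - q1)\<^sup>2 + (Y u - q2)\<^sup>2 - R2" for u
    have KG: "K u = \<mu> / 2 * GG u" if u: "u \<in> S" for u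
    proof -
      have "K u = \<mu> / 2 * max 0 (GG u)" by (simp add: Kr kf_def G_def GG_def Xr)
      moreover have "K u > 0" using pos u by (simp add: S_def)
      ultimately have "\<mu> / 2 * max 0 (GG u) > 0" by simp
      then have "max 0 (GG u) > 0" using assms(1) by (simp add: zero_less_mult_iff)
      then have "max 0 (GG u) = GG u" by simp
      with \<open>K u = \<mu> / 2 * max 0 (GG u)\<close> show ?thesis by simp
    qed
    have dK: "(K has_real_derivative K1 u) (at u)" if u: "u \<in> S" for u
    proof -
      have "((\<lambda>u. \<mu> / 2 * GG u) has_real_derivative K1 u) (at u)"
        unfolding GG_def[abs_def]
        apply (rule derivative_eq_intros dX dY refl)+
        apply (simp add: K1_def algebra_simps)
        done
      then show ?thesis
        by (rule has_field_derivative_transform_within_open[OF _ oS u]) (simp add: KG)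
    qed
    have dK_eq: "\<forall>u\<in>S. K1 u = deriv K u" using dK DERIV_imp_deriv by (metis)
    have Kdiff: "\<forall>u\<in>S. K differentiable at u" using dK real_differentiable_def by blast
    have K1diff: "K1 differentiable at u" for u using dK1 real_differentiable_def by blast
    have ddK: "deriv (deriv K) u = - ((K u) ^ 3) / 2 - lam * K u + \<mu>" if u: "u \<in> S" for u
    proof -
      have "deriv (deriv K) u = deriv K1 u"
        using deriv_cong_open[OF oS u dK_eq] by simp
      also have "\<dots> = \<mu> - lam * K u - (K u)^3 / 2" by (rule DERIV_imp_deriv[OF dK1])
      finally show ?thesis by simp
    qed
    have poly: "Cn n S (\<lambda>u. - ((K u) ^ 3) / 2 - lam * K u + \<mu>)" if "Cn n S K" for n
    proof -
      have "Cn n S (\<lambda>u. K u * (K u * (K u * (- 1 / 2))) + (K u * (- lam) + \<mu>))"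
        by (intro Cn_add[OF oS] Cn_mult[OF oS] that Cn_const)
      then show ?thesis
        by (rule Cn_cong[OF oS, rotated]) (simp add: power3_eq_cube algebra_simps)
    qed
    have "Cn n S K \<and> Cn n S (deriv K)" for n
    proof (induction n)
      case 0 then show ?case by simp
    next
      case (Suc n)
      have "Cn n S (deriv (deriv K))"
        by (rule Cn_cong[OF oS _ poly[OF Suc.IH[THEN conjunct1]]]) (simp add: ddK)
      moreover have "\<forall>u\<in>S. deriv K differentiable at u"
        using diff_cong_open(1)[OF oS _ dK_eq K1diff] by blast
      ultimately show ?case using Kdiff Suc.IH by simp
    qed
    then have "smooth_on S K" by (intro Cn_smooth) blast
    then show "smooth_on {a<..<b} K \<and> (\<forall>s\<in>{a<..<b}. deriv (deriv K) s = - ((K s) ^ 3) / 2 - lam * K s + \<mu>)"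
      using ddK by (simp add: S_def)
  qed
  show ?thesis using part1 part2 unfolding Let_def lam_def[symmetric] K_def by blast
qed

end
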